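(* Assume $\operatorname{non}(\mathcal N)=\mathfrak c$. Then $\mathcal{ND}_{\mathfrak c}$ is strongly $\mathfrak c$-algebrable in $\left(\mathbb R^{[0,1]}\right)^{\mathfrak c}$.
   Context: For a regular infinite cardinal $\kappa$, a $\kappa$-sequence $(x_\alpha)_{\alpha<\kappa}$ converges to $x$ if for every neighbourhood $U$ of $x$ there is $\alpha_0<\kappa$ with $x_\alpha\in U$ for all $\alpha_0<\alpha<\kappa$; $\left(\mathbb R^{[0,1]}\right)^{\kappa}$ is the commutative real algebra of $\kappa$-sequences of functions $[0,1]\to\mathbb R$ with indexwise operations. $\lambda$ is Lebesgue measure, $\mathcal N$ the null subsets of $[0,1]$, $\operatorname{non}(\mathcal N)$ the least cardinality of a non-null subset of $[0,1]$. $\mathcal{ND}_{\kappa}$: $\kappa$-sequences of Lebesgue measurable $f_\alpha:[0,1]\to\mathbb R$ such that there is an integrable $g$ with $|f_\alpha|\le g$ a.e. for all $\alpha$, $f_\alpha\to f$ a.e. for some integrable $f$, and $\int|f_\alpha-f|\,d\lambda\not\to0$. $S$ is strongly $\mu$-algebrable if there is a set $X$ of $\mu$ algebraically independent elements such that every nonzero element of the (non-unital) algebra generated by $X$ belongs to $S$. *)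

theory Defs
  imports "HOL-Analysis.Analysis" "HOL-Library.Poly_Mapping"
begin

text \<open>Elements of (R^[0,1])^kappa: kappa-indexed families of functions [0,1] -> R,
  represented as functions on all reals that vanish outside [0,1]
  (this subalgebra of 'i => real => real is isomorphic to (R^[0,1])^kappa).\<close>

type_synonym 'i seqfun = "'i \<Rightarrow> real \<Rightarrow> real"

definition seq_carrier :: "'i seqfun set" where
  "seq_carrier = {F. \<forall>\<alpha> x. x \<notin> {0..1} \<longrightarrow> F \<alpha> x = 0}"

definition conv_along :: "('i \<times> 'i) set \<Rightarrow> ('i \<Rightarrow> 'a::topological_space) \<Rightarrow> 'a \<Rightarrow> bool" where
  "conv_along r s l \<longleftrightarrow>
     (\<forall>U. open U \<and> l \<in> U \<longrightarrow>
        (\<exists>\<alpha>0 \<in> Field r. \<forall>\<alpha>. (\<alpha>0, \<alpha>) \<in> r \<and> \<alpha> \<noteq> \<alpha>0 \<longrightarrow> s \<alpha> \<in> U))"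

abbreviation lebI :: "real measure" where
  "lebI \<equiv> lebesgue_on {0..1}"

definition ND :: "('i \<times> 'i) set \<Rightarrow> 'i seqfun set" where
  "ND r = {F \<in> seq_carrier.
      (\<forall>\<alpha>. F \<alpha> \<in> borel_measurable lebI) \<and>
      (\<exists>g. integrable lebI g \<and> (\<forall>\<alpha>. AE x in lebI. \<bar>F \<alpha> x\<bar> \<le> g x)) \<and>
      (\<exists>f. integrable lebI f \<and>
           (AE x in lebI. conv_along r (\<lambda>\<alpha>. F \<alpha> x) (f x)) \<and>
           \<not> conv_along r (\<lambda>\<alpha>. LINT x|lebI. \<bar>F \<alpha> x - f x\<bar>) 0)}"

inductive_set gen_alg :: "'i seqfun set \<Rightarrow> 'i seqfun set" for X where
  gen_base: "F \<in> X \<Longrightarrow> F \<in> gen_alg X"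
| gen_add: "F \<in> gen_alg X \<Longrightarrow> G \<in> gen_alg X \<Longrightarrow> (\<lambda>\<alpha> x. F \<alpha> x + G \<alpha> x) \<in> gen_alg X"
| gen_smult: "F \<in> gen_alg X \<Longrightarrow> (\<lambda>\<alpha> x. c * F \<alpha> x) \<in> gen_alg X"
| gen_mult: "F \<in> gen_alg X \<Longrightarrow> G \<in> gen_alg X \<Longrightarrow> (\<lambda>\<alpha> x. F \<alpha> x * G \<alpha> x) \<in> gen_alg X"

definition peval :: "(('i seqfun \<Rightarrow>\<^sub>0 nat) \<Rightarrow>\<^sub>0 real) \<Rightarrow> 'i seqfun" where
  "peval P = (\<lambda>\<alpha> x. \<Sum>mon\<in>Poly_Mapping.keys P. Poly_Mapping.lookup P mon * (\<Prod>v\<in>Poly_Mapping.keys mon. (v::'i seqfun) \<alpha> x ^ Poly_Mapping.lookup mon v))"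

definition alg_indep :: "'i seqfun set \<Rightarrow> bool" where
  "alg_indep X \<longleftrightarrow>
     (\<forall>P. P \<noteq> 0 \<and> Poly_Mapping.lookup P 0 = 0 \<and> (\<forall>m\<in>Poly_Mapping.keys P. Poly_Mapping.keys m \<subseteq> X)
          \<longrightarrow> peval P \<noteq> (\<lambda>\<alpha> x. 0))"

definition strongly_c_algebrable :: "'i seqfun set \<Rightarrow> bool" where
  "strongly_c_algebrable S \<longleftrightarrow>
     (\<exists>X. X \<subseteq> seq_carrier \<and> (card_of X, card_of (UNIV :: real set)) \<in> ordIso \<and> alg_indep X \<and>
          (\<forall>F \<in> gen_alg X. F \<noteq> (\<lambda>\<alpha> x. 0) \<longrightarrow> F \<in> S))"

definition non_N_eq_c :: bool where
  "non_N_eq_c \<longleftrightarrow>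
     (\<exists>A. A \<subseteq> {0..1::real} \<and> A \<notin> null_sets lebesgue \<and> (card_of A, card_of (UNIV :: real set)) \<in> ordIso) \<and>
     (\<forall>A. A \<subseteq> {0..1::real} \<and> A \<notin> null_sets lebesgue \<longrightarrow> (card_of (UNIV :: real set), card_of A) \<in> ordLeq)"

end

theory Submission
  imports Defs "HOL-Library.Countable_Set_Type"
begin
unbundle cardinal_syntax


lemma expsum_zero:
  fixes L :: "real set"
  assumes "finite L"
  shows "(\<forall>x\<in>{0<..<1}. (\<Sum>l\<in>L. c l * exp (l*x)) = 0) \<Longrightarrow> l\<in>L \<Longrightarrow> c l = 0"
using assms proof (induction L arbitrary: c l rule: finite_induct)
  case empty then show ?case by simp
next
  case (insert m L)
  define G where "G = (\<lambda>x. (\<Sum>l\<in>L. c l * exp ((l-m)*x)) + c m)"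
  define G' where "G' = (\<lambda>x. (\<Sum>l\<in>L. c l * (l-m) * exp ((l-m)*x)))"
  have G0: "G x = 0" if "x \<in> {0<..<1}" for x
  proof -
    have "G x = exp (-m*x) * (\<Sum>l\<in>insert m L. c l * exp (l*x))"
      using insert(1,2) by (simp add: G_def sum_distrib_left algebra_simps exp_add[symmetric] exp_diff)
    also have "\<dots> = 0" using insert(4) that by simp
    finally show ?thesis .
  qed
  have D: "G' x = 0" if x: "x \<in> {0<..<1}" for x
  proof -
    have d1: "(G has_real_derivative G' x) (at x)"
      unfolding G_def G'_def
      by (auto intro!: derivative_eq_intros sum.cong)
    have "((\<lambda>_. 0::real) has_real_derivative 0) (at x)" by simp
    then have d2: "(G has_real_derivative 0) (at x)"
      by (rule has_field_derivative_transform_within_open[where S="{0<..<1}"]) (use x G0 in auto)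
    show ?thesis using DERIV_unique[OF d1 d2] .
  qed
  have "c l * (l - m) = 0" if "l \<in> L" for l
  proof (rule insert(3)[of "\<lambda>l. c l * (l-m)"])
    show "\<forall>x\<in>{0<..<1}. (\<Sum>l\<in>L. c l * (l - m) * exp (l * x)) = 0"
    proof
      fix x :: real assume x: "x \<in> {0<..<1}"
      have "(\<Sum>l\<in>L. c l * (l - m) * exp (l * x)) = exp (m*x) * G' x"
        by (simp add: G'_def sum_distrib_left algebra_simps exp_add[symmetric])
      then show "(\<Sum>l\<in>L. c l * (l - m) * exp (l * x)) = 0" using D[OF x] by simp
    qed
  qed (use that in auto)
  then have cL: "c l = 0" if "l \<in> L" for l using that insert(2) by force
  have "(\<Sum>l\<in>insert m L. c l * exp (l*(1/2))) = 0" using insert(4)[rule_format, of "1/2"] by simp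
  then have "c m * exp (m*(1/2)) = 0" using insert(1,2) cL by simp
  then have "c m = 0" by simp
  then show ?case using insert(5) cL by auto
qed




lemma lists_len_ordLeq:
  assumes inf: "infinite B"
  shows "|{xs. set xs \<subseteq> B \<and> length xs = n}| \<le>o |B|"
proof (induction n)
  case 0
  have "{xs. set xs \<subseteq> B \<and> length xs = 0} = {[]}" by auto
  moreover obtain b where "b \<in> B" using inf by fastforce
  then have "|{[]::'a list}| \<le>o |B|" unfolding card_of_ordLeq[symmetric]
    by (intro exI[of _ "\<lambda>_. b"]) auto
  ultimately show ?case by simp
next
  case (Suc n)
  have "{xs. set xs \<subseteq> B \<and> length xs = Suc n} \<subseteq> (\<lambda>(x,xs). x#xs) ` (B \<times> {xs. set xs \<subseteq> B \<and> length xs = n})"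
  proof
    fix xs assume "xs \<in> {xs. set xs \<subseteq> B \<and> length xs = Suc n}"
    then show "xs \<in> (\<lambda>(x,xs). x#xs) ` (B \<times> {xs. set xs \<subseteq> B \<and> length xs = n})"
      by (cases xs) auto
  qed
  then have "|{xs. set xs \<subseteq> B \<and> length xs = Suc n}| \<le>o |B \<times> {xs. set xs \<subseteq> B \<and> length xs = n}|"
    by (rule ordLeq_transitive[OF card_of_mono1 card_of_image])
  moreover have "|B \<times> {xs. set xs \<subseteq> B \<and> length xs = n}| \<le>o |B|"
    using card_of_Times_ordLeq_infinite_Field[of "|B|" B "{xs. set xs \<subseteq> B \<and> length xs = n}"] Suc inf
    by (simp add: card_of_Card_order Field_card_of ordLeq_refl card_of_Well_order card_of_card_order_on)
  ultimately show ?case using ordLeq_transitive by blast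
qed

lemma finsubsets_ordLeq:
  assumes inf: "infinite B"
  shows "|{t. finite t \<and> t \<subseteq> B}| \<le>o |B|"
proof -
  have "{t. finite t \<and> t \<subseteq> B} = set ` (\<Union>n. {xs. set xs \<subseteq> B \<and> length xs = n})"
  proof -
    have "lists B = (\<Union>n. {xs. set xs \<subseteq> B \<and> length xs = n})" by (auto simp: in_lists_conv_set)
    then show ?thesis using Collect_finite_subset_eq_lists[of B] by simp
  qed
  moreover have "|\<Union>n. {xs. set xs \<subseteq> B \<and> length xs = n}| \<le>o |B|"
    apply (rule card_of_UNION_ordLeq_infinite[OF inf])
    using inf infinite_iff_card_of_nat apply blast
    using lists_len_ordLeq[OF inf] by blast
  ultimately show ?thesis using ordLeq_transitive[OF card_of_image] by simp
qed

interpretation QV: vector_space "\<lambda>q::rat. \<lambda>x::real. of_rat q * x"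
  by unfold_locales (auto simp: algebra_simps of_rat_add of_rat_mult)

lemma span_countable:
  assumes "finite t"
  shows "countable (QV.span t)"
proof -
  have "QV.span t = (\<lambda>u. \<Sum>v\<in>t. of_rat (u v) * v) ` (PiE t (\<lambda>_. UNIV))"
  proof
    show "QV.span t \<subseteq> (\<lambda>u. \<Sum>v\<in>t. of_rat (u v) * v) ` (PiE t (\<lambda>_. UNIV))"
    proof
      fix y assume "y \<in> QV.span t"
      then obtain u where y: "y = (\<Sum>v\<in>t. of_rat (u v) * v)"
        using QV.span_finite[OF assms] by auto
      have yy: "y = (\<Sum>v\<in>t. of_rat (restrict u t v) * v)" unfolding y by (rule sum.cong) auto
      show "y \<in> (\<lambda>u. \<Sum>v\<in>t. of_rat (u v) * v) ` (PiE t (\<lambda>_. UNIV))"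
        by (rule image_eqI[where x="restrict u t"], rule yy, simp)
    qed
  next
    show "(\<lambda>u. \<Sum>v\<in>t. of_rat (u v) * v) ` (PiE t (\<lambda>_. UNIV)) \<subseteq> QV.span t"
      unfolding QV.span_finite[OF assms] by (rule image_subsetI) (rule rangeI)
  qed
  moreover have "countable (PiE t (\<lambda>_. UNIV::rat set))"
    by (rule countable_PiE) (use assms in auto)
  ultimately show ?thesis by simp
qed

lemma Qbasis:
  obtains B :: "real set" where "QV.independent B" "|UNIV::real set| \<le>o |B|"
proof -
  obtain B where B: "QV.independent B" "UNIV \<subseteq> QV.span B"
    using QV.maximal_independent_subset[of UNIV] by auto
  have sp: "QV.span B \<subseteq> (\<Union>t\<in>{t. finite t \<and> t \<subseteq> B}. QV.span t)"
  proof
    fix y assume "y \<in> QV.span B"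
    then obtain t r where "y = (\<Sum>a\<in>t. of_rat (r a) * a)" "finite t" "t \<subseteq> B"
      unfolding QV.span_explicit by auto
    moreover have "(\<Sum>a\<in>t. of_rat (r a) * a) \<in> QV.span t"
      using QV.span_finite[OF \<open>finite t\<close>] by auto
    ultimately show "y \<in> (\<Union>t\<in>{t. finite t \<and> t \<subseteq> B}. QV.span t)" by auto
  qed
  have inf: "infinite B"
  proof
    assume "finite B"
    then have "countable (QV.span B)" by (rule span_countable)
    then have "countable (UNIV::real set)" using B(2) countable_subset by blast
    then show False using uncountable_UNIV_real by blast
  qed
  have "|\<Union>t\<in>{t. finite t \<and> t \<subseteq> B}. QV.span t| \<le>o |B|"
  proof (rule card_of_UNION_ordLeq_infinite[OF inf finsubsets_ordLeq[OF inf]], safe)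
    fix t assume "finite t" "t \<subseteq> B"
    have "countable (QV.span t)" using \<open>finite t\<close> by (rule span_countable)
    then have "|QV.span t| \<le>o |UNIV::nat set|" using countable_card_of_nat by blast
    then show "|QV.span t| \<le>o |B|" using inf infinite_iff_card_of_nat ordLeq_transitive by blast
  qed
  then have "|UNIV::real set| \<le>o |B|"
    by (rule ordLeq_transitive[OF card_of_mono1[OF subset_trans[OF B(2) sp]]])
  then show ?thesis using that B(1) by blast
qed




lemma nomax:
  assumes "Card_order r" "Field r = UNIV" "infinite (UNIV::'i set)"
  shows "\<exists>\<alpha>. (\<gamma>::'i) \<in> underS r \<alpha>"
proof -
  have "\<not> (Field r = under r \<gamma>)" using Card_order_infinite_not_under[OF assms(1)] assms(2,3) by auto
  then obtain b where b: "(b,\<gamma>) \<notin> r" using assms(2) unfolding under_def by auto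
  have wo: "Well_order r" using assms(1) unfolding card_order_on_def by auto
  then have tot: "total_on UNIV r" "Refl r" using assms(2) unfolding well_order_on_def linear_order_on_def partial_order_on_def preorder_on_def by auto
  have "b \<noteq> \<gamma>" using b tot(2) assms(2) unfolding refl_on_def by auto
  then have "(\<gamma>,b) \<in> r" using tot(1) b unfolding total_on_def by auto
  then show ?thesis using \<open>b \<noteq> \<gamma>\<close> unfolding underS_def by auto
qed

lemma small_null:
  assumes nN: "non_N_eq_c" and r: "Card_order r" "Field r = UNIV"
    and c: "|UNIV::'i set| =o |UNIV::real set|"
    and A: "A \<subseteq> {0..1::real}" "|A| \<le>o |underS r (\<alpha>::'i)|"
  shows "A \<in> null_sets lebesgue"
proof (rule ccontr)
  assume nn: "A \<notin> null_sets lebesgue"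
  have allA: "\<forall>A. A \<subseteq> {0..1::real} \<and> A \<notin> null_sets lebesgue \<longrightarrow> |UNIV::real set| \<le>o |A|"
    using nN unfolding non_N_eq_c_def by (rule conjunct2)
  have 1: "|UNIV::real set| \<le>o |A|" by (rule mp[OF spec[OF allA, of A]]) (intro conjI A(1) nn)
  have "\<alpha> \<in> Field r" using r(2) by simp
  then have 2: "|underS r \<alpha>| <o r" by (rule card_of_underS[OF r(1)])
  have "r =o |Field r|" by (rule ordIso_symmetric[OF card_of_Field_ordIso[OF r(1)]])
  then have 3: "r =o |UNIV::'i set|" unfolding r(2) .
  have "|UNIV::real set| <o |UNIV::real set|"
    using ordLess_ordIso_trans[OF ordLess_ordIso_trans[OF ordLeq_ordLess_trans[OF ordLeq_transitive[OF 1 A(2)] 2] 3] c] .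
  then show False using ordLess_irreflexive by blast
qed



lemma ND_member:
  fixes r :: "('i \<times> 'i) set"
  assumes r: "Field r = UNIV"
    and nm: "\<And>\<gamma>. \<exists>\<alpha>. \<gamma> \<in> underS r \<alpha>"
    and Ssub: "\<And>\<alpha>. S \<alpha> \<subseteq> {0..1}"
    and Snull: "\<And>\<alpha>. S \<alpha> \<in> null_sets lebesgue"
    and cover: "\<And>x. x \<in> {0..1} \<Longrightarrow> \<exists>\<gamma>. \<forall>\<alpha>. \<gamma> \<in> underS r \<alpha> \<longrightarrow> x \<in> S \<alpha>"
    and h: "continuous_on UNIV h"
    and F: "F = (\<lambda>\<alpha> x. indicator (S \<alpha>) x * h x)"
    and nz: "F \<noteq> (\<lambda>\<alpha> x. 0)"
  shows "F \<in> ND r"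
proof -
  have h01: "continuous_on {0..1} h" using h continuous_on_subset by blast
  have habs: "continuous_on {0..1} (\<lambda>x. \<bar>h x\<bar>)" using h01 by (intro continuous_intros)
  have sets01: "{0..1::real} \<in> sets lebesgue" by simp
  have hm: "h \<in> borel_measurable lebI"
    by (rule continuous_imp_measurable_on_sets_lebesgue[OF h01 sets01])
  have Sm: "S \<alpha> \<in> sets lebesgue" for \<alpha> using Snull[of \<alpha>] by auto
  have Im: "indicator (S \<alpha>) \<in> borel_measurable lebI" for \<alpha>
    by (rule measurable_restrict_space1) (use Sm in auto)
  have Fm: "F \<alpha> \<in> borel_measurable lebI" for \<alpha>
    unfolding F using Im hm by (intro borel_measurable_times) auto
  have hint: "integrable lebI h" by (rule continuous_imp_integrable_real[OF h01])
  have haint: "integrable lebI (\<lambda>x. \<bar>h x\<bar>)" by (rule continuous_imp_integrable_real[OF habs])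
  have carrier: "F \<in> seq_carrier"
    unfolding seq_carrier_def F
  proof (intro CollectI allI impI)
    fix \<alpha> x assume "x \<notin> {0..1::real}"
    then have "x \<notin> S \<alpha>" using Ssub by blast
    then show "indicator (S \<alpha>) x * h x = 0" by simp
  qed
  have dom: "AE x in lebI. \<bar>F \<alpha> x\<bar> \<le> \<bar>h x\<bar>" for \<alpha>
    unfolding F by (auto simp: indicator_def abs_mult)
  have conv: "AE x in lebI. conv_along r (\<lambda>\<alpha>. F \<alpha> x) (h x)"
  proof (rule AE_I2)
    fix x assume "x \<in> space lebI"
    then have x: "x \<in> {0..1}" by simp
    obtain \<gamma> where g: "\<And>\<alpha>. \<gamma> \<in> underS r \<alpha> \<Longrightarrow> x \<in> S \<alpha>" using cover[OF x] by blast
    show "conv_along r (\<lambda>\<alpha>. F \<alpha> x) (h x)"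
      unfolding conv_along_def
    proof (intro allI impI)
      fix U :: "real set" assume U: "open U \<and> h x \<in> U"
      show "\<exists>\<alpha>0\<in>Field r. \<forall>\<alpha>. (\<alpha>0, \<alpha>) \<in> r \<and> \<alpha> \<noteq> \<alpha>0 \<longrightarrow> F \<alpha> x \<in> U"
      proof (intro bexI[of _ \<gamma>] allI impI)
        fix \<alpha> assume "(\<gamma>, \<alpha>) \<in> r \<and> \<alpha> \<noteq> \<gamma>"
        then have "\<gamma> \<in> underS r \<alpha>" unfolding underS_def by auto
        then have "x \<in> S \<alpha>" by (rule g)
        then show "F \<alpha> x \<in> U" using U unfolding F by simp
      qed (use r in auto)
    qed
  qed
  define c0 where "c0 = (LINT x|lebI. \<bar>h x\<bar>)"
  have inteq: "(LINT x|lebI. \<bar>F \<alpha> x - h x\<bar>) = c0" for \<alpha>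
    unfolding c0_def
  proof (rule integral_cong_AE)
    show "(\<lambda>x. \<bar>F \<alpha> x - h x\<bar>) \<in> borel_measurable lebI" using Fm hm by measurable
    show "(\<lambda>x. \<bar>h x\<bar>) \<in> borel_measurable lebI" using hm by measurable
    have "AE x in lebesgue. x \<notin> S \<alpha>" by (rule AE_not_in[OF Snull])
    then have "AE x in lebI. x \<notin> S \<alpha>"
      by (subst AE_restrict_space_iff) (auto elim: AE_mp)
    then show "AE x in lebI. \<bar>F \<alpha> x - h x\<bar> = \<bar>h x\<bar>"
      by (rule AE_mp) (auto simp: F)
  qed
  obtain \<alpha>1 x1 where "F \<alpha>1 x1 \<noteq> 0" using nz by blast
  then have x1: "x1 \<in> S \<alpha>1" "h x1 \<noteq> 0" unfolding F by (auto simp: indicator_def)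
  then have x1': "x1 \<in> {0..1}" using Ssub[of \<alpha>1] by blast
  have c0pos: "c0 > 0"
  proof (rule ccontr)
    assume "\<not> c0 > 0"
    moreover have "c0 \<ge> 0" unfolding c0_def by (rule integral_nonneg_AE) auto
    ultimately have "c0 = 0" by simp
    then have "((\<lambda>x. \<bar>h x\<bar>) has_integral 0) (cbox 0 1)"
      using has_integral_integral_lebesgue_on[OF haint sets01] unfolding c0_def by simp
    then have "\<bar>h x1\<bar> = 0"
      using has_integral_0_cbox_imp_0[of 0 1 "\<lambda>x. \<bar>h x\<bar>" x1] habs x1' by auto
    then show False using x1 by simp
  qed
  have nconv: "\<not> conv_along r (\<lambda>\<alpha>. LINT x|lebI. \<bar>F \<alpha> x - h x\<bar>) 0"
  proof
    assume "conv_along r (\<lambda>\<alpha>. LINT x|lebI. \<bar>F \<alpha> x - h x\<bar>) 0"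
    then obtain \<alpha>0 where a0: "\<And>\<alpha>. (\<alpha>0, \<alpha>) \<in> r \<and> \<alpha> \<noteq> \<alpha>0 \<Longrightarrow> c0 \<in> {..<c0}"
      unfolding conv_along_def inteq using c0pos
      by (metis (no_types, lifting) lessThan_iff open_lessThan)
    obtain \<alpha> where "\<alpha>0 \<in> underS r \<alpha>" using nm by blast
    then have "c0 \<in> {..<c0}" using a0 unfolding underS_def by auto
    then show False by simp
  qed
  show ?thesis
    unfolding ND_def using carrier Fm haint dom hint conv nconv by blast
qed




lemma peval_exp:
  assumes "\<forall>m\<in>Poly_Mapping.keys P. Poly_Mapping.keys m \<subseteq> X"
    and "\<forall>v\<in>X. v \<alpha> x = exp (\<tau> v * x)"
  shows "peval P \<alpha> x = (\<Sum>m\<in>Poly_Mapping.keys P. Poly_Mapping.lookup P m *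
            exp ((\<Sum>v\<in>Poly_Mapping.keys m. real (Poly_Mapping.lookup m v) * \<tau> v) * x))"
  unfolding peval_def
proof (rule sum.cong[OF refl])
  fix m assume m: "m \<in> Poly_Mapping.keys P"
  have "(\<Prod>v\<in>Poly_Mapping.keys m. v \<alpha> x ^ Poly_Mapping.lookup m v)
      = (\<Prod>v\<in>Poly_Mapping.keys m. exp (real (Poly_Mapping.lookup m v) * (\<tau> v * x)))"
  proof (rule prod.cong[OF refl])
    fix v assume "v \<in> Poly_Mapping.keys m"
    then have "v \<alpha> x = exp (\<tau> v * x)" using assms m by blast
    then show "v \<alpha> x ^ Poly_Mapping.lookup m v = exp (real (Poly_Mapping.lookup m v) * (\<tau> v * x))"
      by (simp add: exp_of_nat_mult)
  qed
  also have "\<dots> = exp ((\<Sum>v\<in>Poly_Mapping.keys m. real (Poly_Mapping.lookup m v) * \<tau> v) * x)"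
    by (simp add: exp_sum[symmetric] sum_distrib_right mult.assoc)
  finally show "Poly_Mapping.lookup P m * (\<Prod>v\<in>Poly_Mapping.keys m. v \<alpha> x ^ Poly_Mapping.lookup m v)
     = Poly_Mapping.lookup P m * exp ((\<Sum>v\<in>Poly_Mapping.keys m. real (Poly_Mapping.lookup m v) * \<tau> v) * x)"
    by simp
qed

lemma ell_inj:
  assumes indep: "QV.independent B" and tau: "inj_on \<tau> X" "\<tau> ` X \<subseteq> B"
    and m1: "Poly_Mapping.keys m1 \<subseteq> X" and m2: "Poly_Mapping.keys m2 \<subseteq> X"
    and eq: "(\<Sum>v\<in>Poly_Mapping.keys m1. real (Poly_Mapping.lookup m1 v) * \<tau> v)
           = (\<Sum>v\<in>Poly_Mapping.keys m2. real (Poly_Mapping.lookup m2 v) * \<tau> v)"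
  shows "m1 = (m2 :: 'v \<Rightarrow>\<^sub>0 nat)"
proof -
  define K where "K = Poly_Mapping.keys m1 \<union> Poly_Mapping.keys m2"
  have fK: "finite K" unfolding K_def by simp
  have KX: "K \<subseteq> X" unfolding K_def using m1 m2 by auto
  have s: "(\<Sum>v\<in>Poly_Mapping.keys m. real (Poly_Mapping.lookup m v) * \<tau> v)
         = (\<Sum>v\<in>K. real (Poly_Mapping.lookup m v) * \<tau> v)" if "Poly_Mapping.keys m \<subseteq> K" for m :: "'v \<Rightarrow>\<^sub>0 nat"
    by (rule sum.mono_neutral_left) (use fK that in \<open>auto simp: in_keys_iff\<close>)
  have "(\<Sum>v\<in>K. (real (Poly_Mapping.lookup m1 v) - real (Poly_Mapping.lookup m2 v)) * \<tau> v) = 0"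
    using eq s[of m1] s[of m2] unfolding K_def
    by (simp add: left_diff_distrib sum_subtractf)
  define u where "u = (\<lambda>b. of_int (int (Poly_Mapping.lookup m1 (inv_into K \<tau> b)) - int (Poly_Mapping.lookup m2 (inv_into K \<tau> b))) :: rat)"
  have injK: "inj_on \<tau> K" using tau(1) KX inj_on_subset by blast
  have "(\<Sum>b\<in>\<tau> ` K. of_rat (u b) * b) = (\<Sum>v\<in>K. of_rat (u (\<tau> v)) * \<tau> v)"
    by (rule sum.reindex[OF injK, unfolded comp_def])
  also have "\<dots> = (\<Sum>v\<in>K. (real (Poly_Mapping.lookup m1 v) - real (Poly_Mapping.lookup m2 v)) * \<tau> v)"
    by (rule sum.cong[OF refl]) (simp add: u_def inv_into_f_f[OF injK] of_rat_diff)
  also have "\<dots> = 0" by fact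
  finally have z: "(\<Sum>b\<in>\<tau> ` K. of_rat (u b) * b) = 0" .
  have "Poly_Mapping.lookup m1 v = Poly_Mapping.lookup m2 v" for v
  proof (cases "v \<in> K")
    case True
    have "u (\<tau> v) = 0"
      by (rule QV.independentD[OF indep _ _ z]) (use fK KX tau(2) True in auto)
    then show ?thesis by (simp add: u_def inv_into_f_f[OF injK True])
  next
    case False
    then show ?thesis unfolding K_def by (auto simp: in_keys_iff)
  qed
  then show ?thesis by (rule poly_mapping_eqI)
qed




theorem mainTheorem13:
  fixes r :: "('i \<times> 'i) set"
  assumes "Card_order r" and "Field r = UNIV"
    and "(card_of (UNIV :: 'i set), card_of (UNIV :: real set)) \<in> ordIso"
    and "non_N_eq_c"
  shows "strongly_c_algebrable (ND r)"
proof -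
  note r = assms(1,2)
  obtain f0 :: "'i \<Rightarrow> real" where f0: "bij_betw f0 UNIV UNIV"
    using assms(3) card_of_ordIso[of "UNIV::'i set" "UNIV::real set"] by auto
  have infi: "infinite (UNIV::'i set)"
    using f0 bij_betw_finite infinite_UNIV_char_0 by blast
  have nm: "\<And>\<gamma>. \<exists>\<alpha>. (\<gamma>::'i) \<in> underS r \<alpha>" using nomax[OF r infi] by blast
  define a where "a = (\<lambda>i. max 0 (min 1 (f0 i)))"
  define S where "S = (\<lambda>\<alpha>. a ` underS r \<alpha>)"
  have Ssub: "S \<alpha> \<subseteq> {0..1}" for \<alpha> unfolding S_def a_def by auto
  have Snull: "S \<alpha> \<in> null_sets lebesgue" for \<alpha>
    using small_null[OF assms(4) r assms(3) Ssub] unfolding S_def using card_of_image by blast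
  have ainv: "\<exists>\<gamma>. a \<gamma> = x" if "x \<in> {0..1}" for x
  proof -
    obtain \<gamma> where "f0 \<gamma> = x" using f0 unfolding bij_betw_def by (metis UNIV_I imageE)
    then show ?thesis using that unfolding a_def by (intro exI[of _ \<gamma>]) auto
  qed
  have cover: "\<exists>\<gamma>. \<forall>\<alpha>. \<gamma> \<in> underS r \<alpha> \<longrightarrow> x \<in> S \<alpha>" if "x \<in> {0..1}" for x
    using ainv[OF that] unfolding S_def by blast
  have pt: "\<exists>\<alpha>. x \<in> S \<alpha>" if "x \<in> {0..1}" for x
    using cover[OF that] nm by blast
  obtain B where B: "QV.independent B" "|UNIV::real set| \<le>o |B|" using Qbasis by blast
  define G where "G = (\<lambda>t::real. \<lambda>\<alpha> x. indicator (S \<alpha>) x * exp (t * x))"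
  define X where "X = G ` B"
  have injG: "inj_on G B"
  proof
    fix s t assume "G s = G t"
    obtain \<alpha> where "1 \<in> S \<alpha>" using pt[of 1] by auto
    then have "exp s = exp t" using fun_cong[OF fun_cong[OF \<open>G s = G t\<close>, of \<alpha>], of 1]
      unfolding G_def by simp
    then show "s = t" by simp
  qed
  have Xcar: "X \<subseteq> seq_carrier"
    unfolding X_def seq_carrier_def G_def using Ssub by (force simp: indicator_def)
  have Xcard: "|X| =o |UNIV::real set|"
  proof -
    have "bij_betw G B X" unfolding X_def using injG by (rule inj_on_imp_bij_betw)
    then have "|B| =o |X|" using card_of_ordIso[of B X] by auto
    moreover have "|B| \<le>o |UNIV::real set|" by (rule card_of_mono1) simp
    ultimately have "|B| =o |UNIV::real set|" using B(2) ordIso_iff_ordLeq by blast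
    then show ?thesis using \<open>|B| =o |X|\<close> ordIso_symmetric ordIso_transitive by blast
  qed
  have inv: "\<exists>h. continuous_on UNIV h \<and> F = (\<lambda>\<alpha> x. indicator (S \<alpha>) x * h x)" if "F \<in> gen_alg X" for F
    using that
  proof (induction rule: gen_alg.induct)
    case (gen_base F)
    then obtain t where "F = G t" unfolding X_def by auto
    then show ?case unfolding G_def by (intro exI[of _ "\<lambda>x. exp (t*x)"]) (auto intro!: continuous_intros)
  next
    case (gen_add F G)
    then obtain h1 h2 where "continuous_on UNIV h1" "F = (\<lambda>\<alpha> x. indicator (S \<alpha>) x * h1 x)"
       "continuous_on UNIV h2" "G = (\<lambda>\<alpha> x. indicator (S \<alpha>) x * h2 x)" by blast
    then show ?case by (intro exI[of _ "\<lambda>x. h1 x + h2 x"]) (auto intro!: continuous_intros simp: algebra_simps)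
  next
    case (gen_smult F c)
    then obtain h1 where "continuous_on UNIV h1" "F = (\<lambda>\<alpha> x. indicator (S \<alpha>) x * h1 x)" by blast
    then show ?case by (intro exI[of _ "\<lambda>x. c * h1 x"]) (auto intro!: continuous_intros simp: algebra_simps)
  next
    case (gen_mult F G)
    then obtain h1 h2 where "continuous_on UNIV h1" "F = (\<lambda>\<alpha> x. indicator (S \<alpha>) x * h1 x)"
       "continuous_on UNIV h2" "G = (\<lambda>\<alpha> x. indicator (S \<alpha>) x * h2 x)" by blast
    then show ?case by (intro exI[of _ "\<lambda>x. h1 x * h2 x"]) (auto intro!: continuous_intros simp: indicator_def fun_eq_iff)
  qed
  have inND: "F \<in> ND r" if Fg: "F \<in> gen_alg X" and Fnz: "F \<noteq> (\<lambda>\<alpha> x. 0)" for F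
  proof -
    obtain h where "continuous_on UNIV h" "F = (\<lambda>\<alpha> x. indicator (S \<alpha>) x * h x)" using inv[OF Fg] by blast
    then show ?thesis using ND_member[OF r(2) nm Ssub Snull cover _ _ Fnz] by blast
  qed
  define \<tau> where "\<tau> = inv_into B G"
  have tauX: "\<tau> v \<in> B" "G (\<tau> v) = v" if "v \<in> X" for v
    using that unfolding \<tau>_def X_def by (auto simp: inv_into_into f_inv_into_f)
  have tauinj: "inj_on \<tau> X" unfolding \<tau>_def X_def by (rule inj_on_inv_into) simp
  have indep: "alg_indep X"
    unfolding alg_indep_def
  proof (intro allI impI notI)
    fix P :: "('i seqfun \<Rightarrow>\<^sub>0 nat) \<Rightarrow>\<^sub>0 real"
    assume P: "P \<noteq> 0 \<and> Poly_Mapping.lookup P 0 = 0 \<and> (\<forall>m\<in>Poly_Mapping.keys P. Poly_Mapping.keys m \<subseteq> X)"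
      and z: "peval P = (\<lambda>\<alpha> x. 0)"
    define ell where "ell = (\<lambda>m. \<Sum>v\<in>Poly_Mapping.keys m. real (Poly_Mapping.lookup m v) * \<tau> v)"
    define K where "K = Poly_Mapping.keys P"
    have injl: "inj_on ell K"
    proof
      fix m1 m2 assume "m1 \<in> K" "m2 \<in> K" "ell m1 = ell m2"
      then show "m1 = m2"
        using ell_inj[OF B(1) tauinj _, of m1 m2] P tauX unfolding ell_def K_def by blast
    qed
    define c where "c = (\<lambda>l. Poly_Mapping.lookup P (inv_into K ell l))"
    have "c l = 0" if l: "l \<in> ell ` K" for l
    proof (rule expsum_zero[of "ell ` K" c l])
      show "finite (ell ` K)" unfolding K_def by simp
      show "l \<in> ell ` K" by fact
      show "\<forall>x\<in>{0<..<1}. (\<Sum>l\<in>ell ` K. c l * exp (l * x)) = 0"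
      proof
        fix x :: real assume x: "x \<in> {0<..<1}"
        obtain \<alpha> where xa: "x \<in> S \<alpha>" using pt[of x] x by auto
        have vx: "\<forall>v\<in>X. v \<alpha> x = exp (\<tau> v * x)"
        proof
          fix v assume "v \<in> X"
          then have "v \<alpha> x = G (\<tau> v) \<alpha> x" using tauX by simp
          then show "v \<alpha> x = exp (\<tau> v * x)" unfolding G_def using xa by simp
        qed
        have "(\<Sum>l\<in>ell ` K. c l * exp (l * x)) = (\<Sum>m\<in>K. c (ell m) * exp (ell m * x))"
          by (rule sum.reindex[OF injl, unfolded comp_def])
        also have "\<dots> = (\<Sum>m\<in>K. Poly_Mapping.lookup P m * exp (ell m * x))"
          by (rule sum.cong[OF refl]) (simp add: c_def inv_into_f_f[OF injl])
        also have "\<dots> = peval P \<alpha> x"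
          unfolding K_def ell_def by (rule peval_exp[symmetric]) (use P vx in auto)
        also have "\<dots> = 0" using z by simp
        finally show "(\<Sum>l\<in>ell ` K. c l * exp (l * x)) = 0" .
      qed
    qed
    moreover obtain m where m: "m \<in> K" using P unfolding K_def
      by (metis ex_in_conv keys_eq_empty)
    ultimately have "c (ell m) = 0" by blast
    then have "Poly_Mapping.lookup P m = 0" by (simp add: c_def inv_into_f_f[OF injl m])
    then show False using m unfolding K_def by (simp add: in_keys_iff)
  qed
  show ?thesis
    unfolding strongly_c_algebrable_def
    using Xcar Xcard indep inND by blast
qed


end
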